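(* Let $\psi:\mathbb{R}\to\mathbb{R}$ be of class $\mathcal{C}^1$ such that $\psi'(t)\to-\infty$ as $t\to-\infty$, $\psi'(t)\to+\infty$ as $t\to+\infty$, and $\psi'$ has only finitely many local extrema. Then there exist $0<\theta_0<\theta_1<\pi$ such that for every $\theta\in(0,\pi)\setminus(\theta_0,\theta_1)$, the function $\chi(t)=\psi(t)\sin\theta+t\cos\theta$ satisfies $\chi(t)\to+\infty$ as $t\to\pm\infty$ and $\chi$ has a unique local minimum. *)

theory Defs
  imports "HOL-Analysis.Analysis"
begin

definition is_local_min :: "(real \<Rightarrow> real) \<Rightarrow> real \<Rightarrow> bool" where
  "is_local_min f x \<longleftrightarrow> (\<exists>e>0. \<forall>y. \<bar>y - x\<bar> < e \<longrightarrow> f x \<le> f y)"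

definition is_local_max :: "(real \<Rightarrow> real) \<Rightarrow> real \<Rightarrow> bool" where
  "is_local_max f x \<longleftrightarrow> (\<exists>e>0. \<forall>y. \<bar>y - x\<bar> < e \<longrightarrow> f y \<le> f x)"

end

theory Submission
  imports Defs
begin

lemma lemA:
  fixes f g :: "real \<Rightarrow> real"
  assumes der: "\<And>t. (f has_real_derivative s * (g t - c)) (at t)"
    and s: "s > 0"
    and lt: "\<And>t. t < t0 \<Longrightarrow> g t < c"
    and gt: "\<And>t. t > t0 \<Longrightarrow> g t > c"
    and ltop: "filterlim g at_top at_top"
    and lbot: "filterlim g at_bot at_bot"
  shows "filterlim f at_top at_top \<and> filterlim f at_top at_bot \<and> (\<exists>!t. is_local_min f t)"
proof -
  have mvt: "\<exists>z. a < z \<and> z < b \<and> f b - f a = (b - a) * (s * (g z - c))" if "a < b" for a b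
    using MVT2[OF that, of f "\<lambda>z. s * (g z - c)"] der by blast
  have dec: "f b < f a" if "a < b" "b \<le> t0" for a b
  proof -
    obtain z where z: "a < z" "z < b" "f b - f a = (b - a) * (s * (g z - c))" using mvt[of a b] \<open>a < b\<close> by blast
    have "g z - c < 0" using lt[of z] z that by auto
    hence "s * (g z - c) < 0" using s by (simp add: mult_pos_neg)
    hence "(b - a) * (s * (g z - c)) < 0" using that by (simp add: mult_pos_neg)
    thus ?thesis using z by linarith
  qed
  have inc: "f a < f b" if "a < b" "t0 \<le> a" for a b
  proof -
    obtain z where z: "a < z" "z < b" "f b - f a = (b - a) * (s * (g z - c))" using mvt[of a b] \<open>a < b\<close> by blast
    have "g z - c > 0" using gt[of z] z that by auto
    hence "s * (g z - c) > 0" using s by simp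
    hence "(b - a) * (s * (g z - c)) > 0" using that by simp
    thus ?thesis using z by linarith
  qed
  have glob: "f t0 \<le> f y" for y
    using dec[of y t0] inc[of t0 y] by (cases y t0 rule: linorder_cases) auto
  have min0: "is_local_min f t0" unfolding is_local_min_def using glob by (auto intro: exI[of _ 1])
  have uniq: "t = t0" if lm: "is_local_min f t" for t
  proof (rule ccontr)
    assume ne: "t \<noteq> t0"
    obtain e where e: "e > 0" "\<And>y. \<bar>y - t\<bar> < e \<Longrightarrow> f t \<le> f y" using lm unfolding is_local_min_def by blast
    show False
    proof (cases "t < t0")
      case True
      define y where "y = t + min e (t0 - t) / 2"
      have "t < y" "y < t0" "\<bar>y - t\<bar> < e" using True e(1) unfolding y_def by (auto simp: min_def field_simps)
      thus False using dec[of t y] e(2)[of y] by auto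
    next
      case False
      hence F: "t0 < t" using ne by auto
      define y where "y = t - min e (t - t0) / 2"
      have "y < t" "t0 < y" "\<bar>y - t\<bar> < e" using F e(1) unfolding y_def by (auto simp: min_def field_simps)
      thus False using inc[of y t] e(2)[of y] by auto
    qed
  qed
  have top: "filterlim f at_top at_top"
  proof -
    have "eventually (\<lambda>t. c + 1/s \<le> g t) at_top" using ltop by (simp add: filterlim_at_top)
    then obtain T where T: "\<And>t. t \<ge> T \<Longrightarrow> c + 1/s \<le> g t" by (auto simp: eventually_at_top_linorder)
    have bnd: "f t \<ge> f T + (t - T)" if "t > T" for t
    proof -
      obtain z where z: "T < z" "z < t" "f t - f T = (t - T) * (s * (g z - c))" using mvt[of T t] \<open>t > T\<close> by blast
      have "g z - c \<ge> 1/s" using T[of z] z by auto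
      hence "s * (g z - c) \<ge> s * (1/s)" using s by (intro mult_left_mono) auto
      hence "s * (g z - c) \<ge> 1" using s by simp
      hence "(t - T) * (s * (g z - c)) \<ge> (t - T) * 1" using \<open>t > T\<close> by (intro mult_left_mono) auto
      hence "(t - T) \<le> f t - f T" using z(3) by simp
      thus ?thesis by linarith
    qed
    show ?thesis unfolding filterlim_at_top eventually_at_top_linorder
    proof
      fix Z
      show "\<exists>N. \<forall>x\<ge>N. Z \<le> f x"
        by (rule exI[of _ "max (T+1) (Z - f T + T)"], intro allI impI, use bnd in \<open>smt (verit)\<close>)
    qed
  qed
  have bot: "filterlim f at_top at_bot"
  proof -
    have "eventually (\<lambda>t. g t \<le> c - 1/s) at_bot" using lbot by (simp add: filterlim_at_bot)
    then obtain T where T: "\<And>t. t \<le> T \<Longrightarrow> g t \<le> c - 1/s" by (auto simp: eventually_at_bot_linorder)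
    have bnd: "f t \<ge> f T + (T - t)" if "t < T" for t
    proof -
      obtain z where z: "t < z" "z < T" "f T - f t = (T - t) * (s * (g z - c))" using mvt[of t T] \<open>t < T\<close> by blast
      have "c - g z \<ge> 1/s" using T[of z] z by auto
      hence "s * (c - g z) \<ge> s * (1/s)" using s by (intro mult_left_mono) auto
      hence "s * (c - g z) \<ge> 1" using s by simp
      hence "(T - t) * (s * (c - g z)) \<ge> (T - t) * 1" using \<open>t < T\<close> by (intro mult_left_mono) auto
      hence A: "T - t \<le> (T - t) * (s * (c - g z))" by simp
      have B: "f t - f T = (T - t) * (s * (c - g z))" using z(3) by (simp add: algebra_simps)
      have "T - t \<le> f t - f T" using A B by simp
      thus ?thesis by linarith
    qed
    show ?thesis unfolding filterlim_at_top eventually_at_bot_linorder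
    proof
      fix Z
      show "\<exists>N. \<forall>x\<le>N. Z \<le> f x"
        by (rule exI[of _ "min (T - 1) (T - (Z - f T))"], intro allI impI, use bnd in \<open>smt (verit)\<close>)
    qed
  qed
  show ?thesis using top bot min0 uniq by blast
qed

lemma lemB:
  fixes g :: "real \<Rightarrow> real"
  assumes cont: "continuous_on UNIV g" and lbot: "filterlim g at_bot at_bot"
    and ltop: "filterlim g at_top at_top"
    and fin: "finite {t. is_local_min g t \<or> is_local_max g t}"
  shows "\<exists>C. \<forall>c>C. \<exists>t0. (\<forall>t<t0. g t < c) \<and> (\<forall>t>t0. g t > c)"
proof -
  define S where "S = {t. is_local_min g t \<or> is_local_max g t}"
  define R where "R = (\<Sum>x\<in>S. \<bar>x\<bar>) + 1"
  have finS: "finite S" using fin by (simp add: S_def)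
  have SR: "\<bar>x\<bar> < R" if "x \<in> S" for x
  proof -
    have "\<bar>x\<bar> \<le> (\<Sum>x\<in>S. \<bar>x\<bar>)" by (rule member_le_sum[OF that]) (use finS in auto)
    thus ?thesis by (simp add: R_def)
  qed
  have R0: "R > 0" unfolding R_def by (smt (verit) sum_nonneg abs_ge_zero)
  have contI: "continuous_on A g" for A using cont continuous_on_subset by blast
  have key: False if ab: "R \<le> a" "a < b" "g a = g b" for a b
  proof -
    obtain x where x: "x \<in> {a..b}" "\<forall>y\<in>{a..b}. g y \<le> g x"
      using continuous_attains_sup[of "{a..b}" g] contI ab by auto
    obtain y where y: "y \<in> {a..b}" "\<forall>z\<in>{a..b}. g y \<le> g z"
      using continuous_attains_inf[of "{a..b}" g] contI ab by auto
    have xe: "x = a \<or> x = b"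
    proof (rule ccontr)
      assume "\<not> (x = a \<or> x = b)"
      hence xi: "a < x" "x < b" using x by auto
      have "is_local_max g x" unfolding is_local_max_def
        by (rule exI[of _ "min (x-a) (b-x)"]) (use xi x(2) in \<open>auto simp: abs_less_iff\<close>)
      hence "x \<in> S" by (simp add: S_def)
      thus False using SR[of x] xi ab R0 by auto
    qed
    have ye: "y = a \<or> y = b"
    proof (rule ccontr)
      assume "\<not> (y = a \<or> y = b)"
      hence yi: "a < y" "y < b" using y by auto
      have "is_local_min g y" unfolding is_local_min_def
        by (rule exI[of _ "min (y-a) (b-y)"]) (use yi y(2) in \<open>auto simp: abs_less_iff\<close>)
      hence "y \<in> S" by (simp add: S_def)
      thus False using SR[of y] yi ab R0 by auto
    qed
    have const: "g z = g a" if "z \<in> {a..b}" for z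
      using x(2) y(2) xe ye that ab(3) by (metis order_antisym)
    define m where "m = (a + b) / 2"
    have mi: "a < m" "m < b" using ab unfolding m_def by auto
    have "is_local_max g m" unfolding is_local_max_def
    proof (rule exI[of _ "(b - a) / 2"], intro conjI allI impI)
      show "0 < (b - a) / 2" using ab by simp
      fix z assume "\<bar>z - m\<bar> < (b - a) / 2"
      hence "z \<in> {a..b}" unfolding m_def by (auto simp: abs_less_iff field_simps)
      thus "g z \<le> g m" using const[of z] const[of m] mi by auto
    qed
    hence "m \<in> S" by (simp add: S_def)
    thus False using SR[of m] mi ab R0 by auto
  qed
  have inj: "g a \<noteq> g b" if "R \<le> a" "R \<le> b" "a \<noteq> b" for a b
    using key[of a b] key[of b a] that by (cases "a < b") auto
  have "eventually (\<lambda>t. g t \<le> 0) at_bot" using lbot by (simp add: filterlim_at_bot)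
  then obtain T where T: "\<And>t. t \<le> T \<Longrightarrow> g t \<le> 0" by (auto simp: eventually_at_bot_linorder)
  obtain xb where xb: "xb \<in> {min T R..R}" "\<forall>y\<in>{min T R..R}. g y \<le> g xb"
    using continuous_attains_sup[of "{min T R..R}" g] contI by auto
  define C where "C = max 0 (g xb)"
  have bC: "g t \<le> C" if "t \<le> R" for t
  proof (cases "t \<le> T")
    case True thus ?thesis using T[of t] by (simp add: C_def)
  next
    case False
    hence "t \<in> {min T R..R}" using that by auto
    hence "g t \<le> g xb" using xb(2) by blast
    thus ?thesis by (simp add: C_def)
  qed
  have "\<forall>c>C. \<exists>t0. (\<forall>t<t0. g t < c) \<and> (\<forall>t>t0. g t > c)"
  proof (intro allI impI)
    fix c assume cC: "c > C"
    have "eventually (\<lambda>t. c + 1 \<le> g t) at_top" using ltop by (simp add: filterlim_at_top)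
    then obtain T2 where T2: "\<And>t. t \<ge> T2 \<Longrightarrow> c + 1 \<le> g t" by (auto simp: eventually_at_top_linorder)
    define U where "U = max T2 R"
    have "g R \<le> c" using bC[of R] cC by simp
    moreover have "c \<le> g U" using T2[of U] by (simp add: U_def)
    ultimately obtain t0 where t0: "R \<le> t0" "t0 \<le> U" "g t0 = c"
      using IVT'[of g R c U] contI by (auto simp: U_def)
    show "\<exists>t0. (\<forall>t<t0. g t < c) \<and> (\<forall>t>t0. g t > c)"
    proof (intro exI[of _ t0] conjI allI impI)
      fix t assume tt: "t < t0"
      show "g t < c"
      proof (cases "t \<le> R")
        case True thus ?thesis using bC[of t] cC by simp
      next
        case False
        show ?thesis
        proof (rule ccontr)
          assume "\<not> g t < c"
          hence "c \<le> g t" by simp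
          moreover have "g R \<le> c" using bC[of R] cC by simp
          ultimately obtain x where x: "R \<le> x" "x \<le> t" "g x = c"
            using IVT'[of g R c t] contI False by auto
          thus False using inj[of x t0] t0 tt by auto
        qed
      qed
    next
      fix t assume tt: "t > t0"
      show "g t > c"
      proof (rule ccontr)
        assume "\<not> g t > c"
        hence "g t \<le> c" by simp
        moreover have "c \<le> g (max T2 t)" using T2[of "max T2 t"] by simp
        ultimately obtain x where x: "t \<le> x" "x \<le> max T2 t" "g x = c"
          using IVT'[of g t c "max T2 t"] contI by auto
        thus False using inj[of x t0] t0 tt by auto
      qed
    qed
  qed
  thus ?thesis by blast
qed

lemma lemB2:
  fixes g :: "real \<Rightarrow> real"
  assumes cont: "continuous_on UNIV g" and lbot: "filterlim g at_bot at_bot"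
    and ltop: "filterlim g at_top at_top"
    and fin: "finite {t. is_local_min g t \<or> is_local_max g t}"
  shows "\<exists>C. \<forall>c<C. \<exists>t0. (\<forall>t<t0. g t < c) \<and> (\<forall>t>t0. g t > c)"
proof -
  define h where "h = (\<lambda>t. - g (- t))"
  have hc: "continuous_on UNIV h" unfolding h_def
    by (intro continuous_on_minus continuous_on_compose2[OF cont]) (auto intro: continuous_intros)
  have "filterlim (\<lambda>t. g (- t)) at_top at_bot" using ltop filterlim_at_bot_mirror[of "\<lambda>t. g (- t)" at_top] by simp
  hence hb: "filterlim h at_bot at_bot" unfolding h_def by (rule filterlim_uminus_at_top[THEN iffD1])
  have "filterlim (\<lambda>t. g (- t)) at_bot at_top" using lbot filterlim_at_bot_mirror[of g at_bot] by simp
  hence ht: "filterlim h at_top at_top" unfolding h_def by (rule filterlim_uminus_at_bot[THEN iffD1])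
  have sub: "{t. is_local_min h t \<or> is_local_max h t} \<subseteq> uminus ` {t. is_local_min g t \<or> is_local_max g t}"
  proof
    fix t assume "t \<in> {t. is_local_min h t \<or> is_local_max h t}"
    hence "is_local_max g (-t) \<or> is_local_min g (-t)"
    proof (elim CollectE disjE)
      assume "is_local_min h t"
      then obtain e where e: "e > 0" "\<And>y. \<bar>y - t\<bar> < e \<Longrightarrow> h t \<le> h y" unfolding is_local_min_def by blast
      have "g y \<le> g (-t)" if "\<bar>y - (-t)\<bar> < e" for y
        using e(2)[of "-y"] that by (simp add: h_def abs_minus_commute)
      thus ?thesis unfolding is_local_max_def using e(1) by blast
    next
      assume "is_local_max h t"
      then obtain e where e: "e > 0" "\<And>y. \<bar>y - t\<bar> < e \<Longrightarrow> h y \<le> h t" unfolding is_local_max_def by blast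
      have "g (-t) \<le> g y" if "\<bar>y - (-t)\<bar> < e" for y
        using e(2)[of "-y"] that by (simp add: h_def abs_minus_commute)
      thus ?thesis unfolding is_local_min_def using e(1) by blast
    qed
    hence "-t \<in> {t. is_local_min g t \<or> is_local_max g t}" by auto
    thus "t \<in> uminus ` {t. is_local_min g t \<or> is_local_max g t}" by (metis image_eqI minus_minus)
  qed
  have hf: "finite {t. is_local_min h t \<or> is_local_max h t}"
    using finite_subset[OF sub finite_imageI[OF fin]] .
  obtain C where C: "\<forall>c>C. \<exists>t0. (\<forall>t<t0. h t < c) \<and> (\<forall>t>t0. h t > c)"
    using lemB[OF hc hb ht hf] by blast
  have "\<forall>c< -C. \<exists>t0. (\<forall>t<t0. g t < c) \<and> (\<forall>t>t0. g t > c)"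
  proof (intro allI impI)
    fix c assume "c < -C"
    then obtain t0 where t0: "\<forall>t<t0. h t < -c" "\<forall>t>t0. h t > -c" using C[rule_format, of "-c"] by auto
    show "\<exists>t0. (\<forall>t<t0. g t < c) \<and> (\<forall>t>t0. g t > c)"
    proof (intro exI[of _ "-t0"] conjI allI impI)
      fix t assume "t < -t0" thus "g t < c" using t0(2)[rule_format, of "-t"] by (simp add: h_def)
    next
      fix t assume "t > -t0" thus "g t > c" using t0(1)[rule_format, of "-t"] by (simp add: h_def)
    qed
  qed
  thus ?thesis by blast
qed

theorem lemma3p2:
  fixes \<psi> \<psi>' :: "real \<Rightarrow> real"
  assumes deriv: "\<And>t. (\<psi> has_real_derivative \<psi>' t) (at t)"
    and cont: "continuous_on UNIV \<psi>'"
    and lim_bot: "filterlim \<psi>' at_bot at_bot"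
    and lim_top: "filterlim \<psi>' at_top at_top"
    and fin: "finite {t. is_local_min \<psi>' t \<or> is_local_max \<psi>' t}"
  shows "\<exists>\<theta>0 \<theta>1. 0 < \<theta>0 \<and> \<theta>0 < \<theta>1 \<and> \<theta>1 < pi \<and>
           (\<forall>\<theta>\<in>{0<..<pi} - {\<theta>0<..<\<theta>1}.
              let chi = (\<lambda>t. \<psi> t * sin \<theta> + t * cos \<theta>) in
                filterlim chi at_top at_top \<and> filterlim chi at_top at_bot \<and>
                (\<exists>!t. is_local_min chi t))"
proof -
  obtain C1 where C1: "\<forall>c>C1. \<exists>t0. (\<forall>t<t0. \<psi>' t < c) \<and> (\<forall>t>t0. \<psi>' t > c)"
    using lemB[OF cont lim_bot lim_top fin] by blast
  obtain C2 where C2: "\<forall>c<C2. \<exists>t0. (\<forall>t<t0. \<psi>' t < c) \<and> (\<forall>t>t0. \<psi>' t > c)"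
    using lemB2[OF cont lim_bot lim_top fin] by blast
  define M where "M = \<bar>C1\<bar> + \<bar>C2\<bar> + 1"
  define a where "a = arctan (1/M)"
  have M0: "M > 0" unfolding M_def by (smt (verit) abs_ge_zero)
  have a0: "0 < a" unfolding a_def using M0 by simp
  have ah: "a < pi/2" unfolding a_def by (rule arctan_ubound)
  have cotb: "cos p / sin p \<ge> M" if p: "0 < p" "p \<le> a" for p
  proof -
    have "tan p \<le> tan a" by (rule tan_mono_le) (use p ah pi_gt_zero in auto)
    hence t1: "tan p \<le> 1/M" unfolding a_def by (simp add: tan_arctan)
    have t0: "tan p > 0" by (rule tan_gt_zero) (use p ah in auto)
    have "cos p / sin p = 1 / tan p" by (simp add: tan_def)
    moreover have "M \<le> 1 / tan p" using t1 t0 M0 by (simp add: field_simps)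
    ultimately show ?thesis by simp
  qed
  have main: "\<forall>\<theta>\<in>{0<..<pi} - {a<..<pi - a}.
              let chi = (\<lambda>t. \<psi> t * sin \<theta> + t * cos \<theta>) in
                filterlim chi at_top at_top \<and> filterlim chi at_top at_bot \<and>
                (\<exists>!t. is_local_min chi t)"
  proof
    fix \<theta> assume th: "\<theta> \<in> {0<..<pi} - {a<..<pi - a}"
    have sp: "sin \<theta> > 0" by (rule sin_gt_zero) (use th in auto)
    define c where "c = - cos \<theta> / sin \<theta>"
    have derchi: "((\<lambda>t. \<psi> t * sin \<theta> + t * cos \<theta>) has_real_derivative sin \<theta> * (\<psi>' t - c)) (at t)" for t
    proof -
      have "((\<lambda>t. \<psi> t * sin \<theta> + t * cos \<theta>) has_real_derivative \<psi>' t * sin \<theta> + 1 * cos \<theta>) (at t)"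
        by (rule DERIV_add[OF DERIV_cmult_right[OF deriv] DERIV_cmult_right[OF DERIV_ident]])
      moreover have "\<psi>' t * sin \<theta> + 1 * cos \<theta> = sin \<theta> * (\<psi>' t - c)" using sp by (simp add: c_def field_simps)
      ultimately show ?thesis by simp
    qed
    have "\<exists>t0. (\<forall>t<t0. \<psi>' t < c) \<and> (\<forall>t>t0. \<psi>' t > c)"
    proof (cases "\<theta> \<le> a")
      case True
      have "cos \<theta> / sin \<theta> \<ge> M" using cotb[of \<theta>] True th by auto
      hence "c < C2" unfolding c_def M_def by (smt (verit) abs_ge_self minus_divide_left)
      thus ?thesis using C2 by blast
    next
      case False
      hence "\<theta> \<ge> pi - a" using th by auto
      hence "cos (pi - \<theta>) / sin (pi - \<theta>) \<ge> M" using cotb[of "pi - \<theta>"] th by auto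
      hence "c \<ge> M" by (simp add: c_def)
      hence "c > C1" unfolding M_def by (smt (verit) abs_ge_self)
      thus ?thesis using C1 by blast
    qed
    then obtain t0 where t0: "\<And>t. t < t0 \<Longrightarrow> \<psi>' t < c" "\<And>t. t > t0 \<Longrightarrow> \<psi>' t > c" by blast
    show "let chi = (\<lambda>t. \<psi> t * sin \<theta> + t * cos \<theta>) in
                filterlim chi at_top at_top \<and> filterlim chi at_top at_bot \<and>
                (\<exists>!t. is_local_min chi t)"
      unfolding Let_def by (rule lemA[OF derchi sp t0 lim_top lim_bot])
  qed
  have "0 < a \<and> a < pi - a \<and> pi - a < pi" using a0 ah by simp
  with main show ?thesis by blast
qed

end
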